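(* Let $\varepsilon>0$ and let $(G,\mathcal P,\mathcal I,k)$ be an instance of $\mathrm{BAL}(\mu,\nu)$ with $k\ge2\nu/\varepsilon$. Let $(G',\mathcal P,\mathcal I',k)$ be the transformed instance obtained by adding a new isolated node $v$ to $G$ and adding $v$ to $I_i$ for every $i\in[\nu]$. Let $\Phi'$ be the objective of the transformed instance and $\mathcal S'$ a solution of it with $\Phi'(\mathcal S')\ge\alpha\,\Phi'(\mathcal S'^* )$, where $\mathcal S'^*$ is an optimal solution for maximizing $\Phi'$. Then $\mathcal S=\mathcal S'\setminus\{v\}$ (removing $v$ from every set) satisfies $\Phi(\mathcal S)\ge(\alpha-\varepsilon)\Phi(\mathcal S^* )$, where $\mathcal S^*$ is an optimal solution for maximizing $\Phi$ in the original instance.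
   Context: Triggering model: for a directed graph $G=(V,E)$ and $p:E\to[0,1]$, an outcome $X=(T_v)_{v\in V}$ is obtained by having each node $v$ independently choose a subset $T_v$ of its in-neighbours $N_v$, with $T_v=S$ with probability $\prod_{u\in S}p_{uv}\prod_{u\in N_v\setminus S}(1-p_{uv})$; $\rho_X(A)$ is the set of nodes reachable from $A\subseteq V$ via arcs $\{(u,v):u\in T_v\}$. $\mathrm{BAL}(\mu,\nu)$ for integer constants $\mu\ge\nu\ge2$: instance = directed graph $G=(V,E)$, probability functions $\mathcal P=(p_1,\dots,p_\mu)$ on $E$, seed sets $\mathcal I=(I_1,\dots,I_\mu)$, budget $k\ge2$; standing assumptions $\nu\le k\le\nu|V|$, $|V|\ge\mu$. A solution is $\mathcal S=(S_1,\dots,S_\mu)$, $S_i\subseteq V$, $\sum_i|S_i|\le k$. An outcome profile $(X_1,\dots,X_\mu)$ consists of outcomes $X_i$ w.r.t. $p_i$ (independent in the heterogeneous setting; identical in the correlated setting). $\Phi(\mathcal S)$ is the expected number of nodes lying in none or in at least $\nu$ of the sets $\rho_{X_i}(I_i\cup S_i)$. *)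

theory Defs
  imports Complex_Main "HOL-Library.FuncSet"
begin

text \<open>Directed graph: finite node set V, arc set E \<subseteq> V \<times> V. Nodes have type 'a.
  Indices of the \<mu> campaigns are 0..\<mu>-1; "[\<nu>]" is {0..\<nu>-1}.\<close>

definition in_nbrs :: "('a \<times> 'a) set \<Rightarrow> 'a \<Rightarrow> 'a set" where
  "in_nbrs E w = {u. (u, w) \<in> E}"

text \<open>An outcome X assigns to each node w the chosen subset T_w of its in-neighbours
  (and the empty set to non-nodes).\<close>
definition outcomes :: "'a set \<Rightarrow> ('a \<times> 'a) set \<Rightarrow> ('a \<Rightarrow> 'a set) set" where
  "outcomes V E = {X. \<forall>w. X w \<subseteq> (if w \<in> V then in_nbrs E w else {})}"

definition outcome_prob :: "'a set \<Rightarrow> ('a \<times> 'a) set \<Rightarrow> ('a \<times> 'a \<Rightarrow> real) \<Rightarrow> ('a \<Rightarrow> 'a set) \<Rightarrow> real" where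
  "outcome_prob V E p X =
     (\<Prod>w\<in>V. \<Prod>u\<in>in_nbrs E w. if u \<in> X w then p (u, w) else 1 - p (u, w))"

definition reach :: "('a \<Rightarrow> 'a set) \<Rightarrow> 'a set \<Rightarrow> 'a set" where
  "reach X A = {y. \<exists>x\<in>A. (x, y) \<in> {(u, w). u \<in> X w}\<^sup>*}"

definition balanced_count ::
  "nat \<Rightarrow> nat \<Rightarrow> 'a set \<Rightarrow> (nat \<Rightarrow> 'a set) \<Rightarrow> (nat \<Rightarrow> 'a set) \<Rightarrow> (nat \<Rightarrow> 'a \<Rightarrow> 'a set) \<Rightarrow> real" where
  "balanced_count \<mu> \<nu> V I S Xs =
     real (card {w\<in>V. let c = card {i\<in>{..<\<mu>}. w \<in> reach (Xs i) (I i \<union> S i)} in c = 0 \<or> \<nu> \<le> c})"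

text \<open>If corr is False (heterogeneous setting) the outcomes X_i w.r.t. p_i are
  independent; if corr is True (correlated setting) all outcomes are one and the same outcome X
  (drawn w.r.t. p_0; in this setting the p_i coincide).\<close>
definition Phi ::
  "bool \<Rightarrow> nat \<Rightarrow> nat \<Rightarrow> 'a set \<Rightarrow> ('a \<times> 'a) set \<Rightarrow> (nat \<Rightarrow> 'a \<times> 'a \<Rightarrow> real)
     \<Rightarrow> (nat \<Rightarrow> 'a set) \<Rightarrow> (nat \<Rightarrow> 'a set) \<Rightarrow> real" where
  "Phi corr \<mu> \<nu> V E P I S =
     (if corr then
        (\<Sum>X\<in>outcomes V E. outcome_prob V E (P 0) X * balanced_count \<mu> \<nu> V I S (\<lambda>_. X))
      else
        (\<Sum>Xs\<in>(PiE {..<\<mu>} (\<lambda>_. outcomes V E)).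
            (\<Prod>i<\<mu>. outcome_prob V E (P i) (Xs i)) * balanced_count \<mu> \<nu> V I S Xs))"

definition BAL_instance ::
  "bool \<Rightarrow> nat \<Rightarrow> nat \<Rightarrow> 'a set \<Rightarrow> ('a \<times> 'a) set \<Rightarrow> (nat \<Rightarrow> 'a \<times> 'a \<Rightarrow> real)
     \<Rightarrow> (nat \<Rightarrow> 'a set) \<Rightarrow> nat \<Rightarrow> bool" where
  "BAL_instance corr \<mu> \<nu> V E P I k \<longleftrightarrow>
     2 \<le> \<nu> \<and> \<nu> \<le> \<mu> \<and> finite V \<and> E \<subseteq> V \<times> V \<and>
     (\<forall>i<\<mu>. \<forall>e\<in>E. 0 \<le> P i e \<and> P i e \<le> 1) \<and>
     (\<forall>i<\<mu>. I i \<subseteq> V) \<and>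
     (corr \<longrightarrow> (\<forall>i<\<mu>. \<forall>e\<in>E. P i e = P 0 e)) \<and>
     2 \<le> k \<and> \<nu> \<le> k \<and> k \<le> \<nu> * card V \<and> \<mu> \<le> card V"

definition feasible :: "nat \<Rightarrow> 'a set \<Rightarrow> nat \<Rightarrow> (nat \<Rightarrow> 'a set) \<Rightarrow> bool" where
  "feasible \<mu> V k S \<longleftrightarrow> (\<forall>i<\<mu>. S i \<subseteq> V) \<and> (\<Sum>i<\<mu>. card (S i)) \<le> k"

definition optimal ::
  "bool \<Rightarrow> nat \<Rightarrow> nat \<Rightarrow> 'a set \<Rightarrow> ('a \<times> 'a) set \<Rightarrow> (nat \<Rightarrow> 'a \<times> 'a \<Rightarrow> real)
     \<Rightarrow> (nat \<Rightarrow> 'a set) \<Rightarrow> nat \<Rightarrow> (nat \<Rightarrow> 'a set) \<Rightarrow> bool" where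
  "optimal corr \<mu> \<nu> V E P I k S \<longleftrightarrow> feasible \<mu> V k S \<and>
     (\<forall>T. feasible \<mu> V k T \<longrightarrow> Phi corr \<mu> \<nu> V E P I T \<le> Phi corr \<mu> \<nu> V E P I S)"

end

theory Submission
  imports Defs
begin

lemma R_no_v:
  assumes X: "X \<in> outcomes V E" and EV: "E \<subseteq> V \<times> V" and vV: "v \<notin> V"
  shows "(v, y) \<notin> {(u, w). u \<in> X w}" "(x, v) \<notin> {(u, w). u \<in> X w}"
proof -
  have Xw: "X w \<subseteq> (if w \<in> V then in_nbrs E w else {})" for w
    using X unfolding outcomes_def by blast
  show "(v, y) \<notin> {(u, w). u \<in> X w}"
  proof
    assume "(v, y) \<in> {(u, w). u \<in> X w}"
    then have "v \<in> X y" by simp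
    with Xw[of y] have "(v, y) \<in> E" by (auto simp: in_nbrs_def split: if_splits)
    with EV vV show False by blast
  qed
  show "(x, v) \<notin> {(u, w). u \<in> X w}"
  proof
    assume "(x, v) \<in> {(u, w). u \<in> X w}"
    then have "x \<in> X v" by simp
    with Xw[of v] vV show False by auto
  qed
qed

lemma rtr_from_v:
  assumes X: "X \<in> outcomes V E" and EV: "E \<subseteq> V \<times> V" and vV: "v \<notin> V"
    and "(v, y) \<in> {(u, w). u \<in> X w}\<^sup>*"
  shows "y = v"
  using assms(4)
proof (induction rule: rtrancl_induct)
  case base then show ?case by simp
next
  case (step y z)
  then show ?case using R_no_v[OF X EV vV] by blast
qed

lemma rtr_to_v:
  assumes X: "X \<in> outcomes V E" and EV: "E \<subseteq> V \<times> V" and vV: "v \<notin> V"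
    and "(x, v) \<in> {(u, w). u \<in> X w}\<^sup>*"
  shows "x = v"
  using assms(4)
proof (induction rule: converse_rtrancl_induct)
  case base then show ?case by simp
next
  case (step y z)
  then show ?case using R_no_v[OF X EV vV] by blast
qed

lemma reach_iff:
  assumes X: "X \<in> outcomes V E" and EV: "E \<subseteq> V \<times> V" and vV: "v \<notin> V" and "w \<noteq> v"
  shows "(w \<in> reach X A) = (w \<in> reach X (A - {v}))"
  using rtr_from_v[OF X EV vV] assms(4) unfolding reach_def by blast

lemma reach_v:
  assumes X: "X \<in> outcomes V E" and EV: "E \<subseteq> V \<times> V" and vV: "v \<notin> V"
  shows "(v \<in> reach X A) = (v \<in> A)"
  using rtr_to_v[OF X EV vV] unfolding reach_def by blast

lemma bc_shift:
  assumes fin: "finite V" and EV: "E \<subseteq> V \<times> V" and vV: "v \<notin> V"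
    and IV: "\<forall>i<\<mu>. I i \<subseteq> V" and nm: "\<nu> \<le> \<mu>"
    and Xs: "\<forall>i<\<mu>. Xs i \<in> outcomes V E"
  shows "balanced_count \<mu> \<nu> (insert v V) (\<lambda>i. if i < \<nu> then I i \<union> {v} else I i) T Xs
       = balanced_count \<mu> \<nu> V I (\<lambda>i. T i - {v}) Xs + 1"
proof -
  let ?I' = "\<lambda>i. if i < \<nu> then I i \<union> {v} else I i"
  let ?P' = "\<lambda>w. let c = card {i\<in>{..<\<mu>}. w \<in> reach (Xs i) (?I' i \<union> T i)} in c = 0 \<or> \<nu> \<le> c"
  let ?P = "\<lambda>w. let c = card {i\<in>{..<\<mu>}. w \<in> reach (Xs i) (I i \<union> (T i - {v}))} in c = 0 \<or> \<nu> \<le> c"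
  have eqs: "{i\<in>{..<\<mu>}. w \<in> reach (Xs i) (?I' i \<union> T i)}
           = {i\<in>{..<\<mu>}. w \<in> reach (Xs i) (I i \<union> (T i - {v}))}" if w: "w \<in> V" for w
  proof -
    have "w \<noteq> v" using w vV by blast
    have "w \<in> reach (Xs i) (?I' i \<union> T i) \<longleftrightarrow> w \<in> reach (Xs i) (I i \<union> (T i - {v}))" if i: "i < \<mu>" for i
    proof -
      have "(?I' i \<union> T i) - {v} = I i \<union> (T i - {v})" using IV i vV by auto
      then show ?thesis using reach_iff[OF Xs[rule_format, OF i] EV vV \<open>w \<noteq> v\<close>, of "?I' i \<union> T i"]
        by simp
    qed
    then show ?thesis by blast
  qed
  have Pv: "?P' v"
  proof -
    have sub: "{..<\<nu>} \<subseteq> {i\<in>{..<\<mu>}. v \<in> reach (Xs i) (?I' i \<union> T i)}"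
      using reach_v[OF _ EV vV] Xs nm by auto
    have "\<nu> \<le> card {i\<in>{..<\<mu>}. v \<in> reach (Xs i) (?I' i \<union> T i)}"
      using card_mono[OF _ sub] by simp
    then show ?thesis by (simp add: Let_def)
  qed
  have PP: "?P' w = ?P w" if "w \<in> V" for w
    using eqs[OF that] by (simp only: Let_def)
  have "{w\<in>insert v V. ?P' w} = insert v {w\<in>V. ?P w}"
  proof (rule set_eqI)
    fix w show "w \<in> {w\<in>insert v V. ?P' w} \<longleftrightarrow> w \<in> insert v {w\<in>V. ?P w}"
      using Pv PP[of w] by blast
  qed
  then have "card {w\<in>insert v V. ?P' w} = card {w\<in>V. ?P w} + 1"
    using fin vV by simp
  then show ?thesis unfolding balanced_count_def by simp
qed


lemma outcomes_ins:
  assumes EV: "E \<subseteq> V \<times> V" and vV: "v \<notin> V"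
  shows "outcomes (insert v V) E = outcomes V E"
proof -
  have "in_nbrs E v = {}" using EV vV unfolding in_nbrs_def by blast
  then show ?thesis unfolding outcomes_def by (auto simp: if_split)
qed

lemma oprob_ins:
  assumes fin: "finite V" and EV: "E \<subseteq> V \<times> V" and vV: "v \<notin> V"
  shows "outcome_prob (insert v V) E p X = outcome_prob V E p X"
proof -
  have "in_nbrs E v = {}" using EV vV unfolding in_nbrs_def by blast
  then show ?thesis unfolding outcome_prob_def using fin vV by simp
qed

lemma oprob_nonneg:
  assumes "\<forall>e\<in>E. 0 \<le> p e \<and> p e \<le> 1"
  shows "0 \<le> outcome_prob V E p X"
  unfolding outcome_prob_def
  by (rule prod_nonneg, rule prod_nonneg) (use assms in \<open>auto simp: in_nbrs_def\<close>)

definition Zc :: "bool \<Rightarrow> nat \<Rightarrow> 'a set \<Rightarrow> ('a \<times> 'a) set \<Rightarrow> (nat \<Rightarrow> 'a \<times> 'a \<Rightarrow> real) \<Rightarrow> real" where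
  "Zc corr \<mu> V E P = (if corr then (\<Sum>X\<in>outcomes V E. outcome_prob V E (P 0) X)
     else (\<Sum>Xs\<in>(PiE {..<\<mu>} (\<lambda>_. outcomes V E)). (\<Prod>i<\<mu>. outcome_prob V E (P i) (Xs i))))"

lemma Phi_shift:
  assumes fin: "finite V" and EV: "E \<subseteq> V \<times> V" and vV: "v \<notin> V"
    and IV: "\<forall>i<\<mu>. I i \<subseteq> V" and nm: "\<nu> \<le> \<mu>"
  shows "Phi corr \<mu> \<nu> (insert v V) E P (\<lambda>i. if i < \<nu> then I i \<union> {v} else I i) T
       = Phi corr \<mu> \<nu> V E P I (\<lambda>i. T i - {v}) + Zc corr \<mu> V E P"
proof (cases corr)
  case True
  have "Phi corr \<mu> \<nu> (insert v V) E P (\<lambda>i. if i < \<nu> then I i \<union> {v} else I i) T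
     = (\<Sum>X\<in>outcomes V E. outcome_prob V E (P 0) X * balanced_count \<mu> \<nu> (insert v V) (\<lambda>i. if i < \<nu> then I i \<union> {v} else I i) T (\<lambda>_. X))"
    unfolding Phi_def using True by (simp only: if_True outcomes_ins[OF EV vV] oprob_ins[OF fin EV vV])
  also have "\<dots> = (\<Sum>X\<in>outcomes V E. outcome_prob V E (P 0) X * (balanced_count \<mu> \<nu> V I (\<lambda>i. T i - {v}) (\<lambda>_. X) + 1))"
    by (intro sum.cong refl) (simp add: bc_shift[OF fin EV vV IV nm])
  also have "\<dots> = (\<Sum>X\<in>outcomes V E. outcome_prob V E (P 0) X * balanced_count \<mu> \<nu> V I (\<lambda>i. T i - {v}) (\<lambda>_. X)) + (\<Sum>X\<in>outcomes V E. outcome_prob V E (P 0) X)"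
    by (simp add: distrib_left sum.distrib)
  also have "\<dots> = Phi corr \<mu> \<nu> V E P I (\<lambda>i. T i - {v}) + Zc corr \<mu> V E P"
    unfolding Phi_def Zc_def using True by (simp only: if_True)
  finally show ?thesis .
next
  case False
  have "Phi corr \<mu> \<nu> (insert v V) E P (\<lambda>i. if i < \<nu> then I i \<union> {v} else I i) T
     = (\<Sum>Xs\<in>(PiE {..<\<mu>} (\<lambda>_. outcomes V E)). (\<Prod>i<\<mu>. outcome_prob V E (P i) (Xs i)) * balanced_count \<mu> \<nu> (insert v V) (\<lambda>i. if i < \<nu> then I i \<union> {v} else I i) T Xs)"
    unfolding Phi_def using False by (simp only: if_False outcomes_ins[OF EV vV] oprob_ins[OF fin EV vV])
  also have "\<dots> = (\<Sum>Xs\<in>(PiE {..<\<mu>} (\<lambda>_. outcomes V E)). (\<Prod>i<\<mu>. outcome_prob V E (P i) (Xs i)) * (balanced_count \<mu> \<nu> V I (\<lambda>i. T i - {v}) Xs + 1))"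
  proof (intro sum.cong refl)
    fix Xs assume "Xs \<in> PiE {..<\<mu>} (\<lambda>_. outcomes V E)"
    then have "\<forall>i<\<mu>. Xs i \<in> outcomes V E" by (auto simp: PiE_iff)
    then show "(\<Prod>i<\<mu>. outcome_prob V E (P i) (Xs i)) * balanced_count \<mu> \<nu> (insert v V) (\<lambda>i. if i < \<nu> then I i \<union> {v} else I i) T Xs = (\<Prod>i<\<mu>. outcome_prob V E (P i) (Xs i)) * (balanced_count \<mu> \<nu> V I (\<lambda>i. T i - {v}) Xs + 1)"
      by (simp only: bc_shift[OF fin EV vV IV nm])
  qed
  also have "\<dots> = (\<Sum>Xs\<in>(PiE {..<\<mu>} (\<lambda>_. outcomes V E)). (\<Prod>i<\<mu>. outcome_prob V E (P i) (Xs i)) * balanced_count \<mu> \<nu> V I (\<lambda>i. T i - {v}) Xs) + (\<Sum>Xs\<in>(PiE {..<\<mu>} (\<lambda>_. outcomes V E)). (\<Prod>i<\<mu>. outcome_prob V E (P i) (Xs i)))"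
    by (simp add: distrib_left sum.distrib)
  also have "\<dots> = Phi corr \<mu> \<nu> V E P I (\<lambda>i. T i - {v}) + Zc corr \<mu> V E P"
    unfolding Phi_def Zc_def using False by (simp only: if_False)
  finally show ?thesis .
qed

lemma Phi_lower:
  assumes Pr: "\<forall>i<\<mu>. \<forall>e\<in>E. 0 \<le> P i e \<and> P i e \<le> 1" and mpos: "0 < \<mu>"
    and bc: "\<And>Xs. balanced_count \<mu> \<nu> V I S Xs \<ge> m"
  shows "Phi corr \<mu> \<nu> V E P I S \<ge> m * Zc corr \<mu> V E P"
proof (cases corr)
  case True
  have P0: "\<forall>e\<in>E. 0 \<le> P 0 e \<and> P 0 e \<le> 1" using Pr mpos by blast
  have "m * Zc corr \<mu> V E P = (\<Sum>X\<in>outcomes V E. outcome_prob V E (P 0) X * m)"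
    using True unfolding Zc_def by (simp add: sum_distrib_left mult.commute)
  also have "\<dots> \<le> (\<Sum>X\<in>outcomes V E. outcome_prob V E (P 0) X * balanced_count \<mu> \<nu> V I S (\<lambda>_. X))"
    by (rule sum_mono, rule mult_left_mono[OF bc oprob_nonneg[OF P0]])
  also have "\<dots> = Phi corr \<mu> \<nu> V E P I S"
    unfolding Phi_def using True by (simp only: if_True)
  finally show ?thesis .
next
  case False
  have "m * Zc corr \<mu> V E P = (\<Sum>Xs\<in>(PiE {..<\<mu>} (\<lambda>_. outcomes V E)). (\<Prod>i<\<mu>. outcome_prob V E (P i) (Xs i)) * m)"
    using False unfolding Zc_def by (simp add: sum_distrib_left mult.commute)
  also have "\<dots> \<le> (\<Sum>Xs\<in>(PiE {..<\<mu>} (\<lambda>_. outcomes V E)). (\<Prod>i<\<mu>. outcome_prob V E (P i) (Xs i)) * balanced_count \<mu> \<nu> V I S Xs)"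
  proof (rule sum_mono, rule mult_left_mono[OF bc])
    fix Xs show "0 \<le> (\<Prod>i<\<mu>. outcome_prob V E (P i) (Xs i))"
      by (rule prod_nonneg) (use Pr in \<open>auto intro!: oprob_nonneg\<close>)
  qed
  also have "\<dots> = Phi corr \<mu> \<nu> V E P I S"
    unfolding Phi_def using False by (simp only: if_False)
  finally show ?thesis .
qed

lemma Zc_nonneg:
  assumes Pr: "\<forall>i<\<mu>. \<forall>e\<in>E. 0 \<le> P i e \<and> P i e \<le> 1" and mpos: "0 < \<mu>"
  shows "0 \<le> Zc corr \<mu> V E P"
proof -
  have P0: "\<forall>e\<in>E. 0 \<le> P 0 e \<and> P 0 e \<le> 1" using Pr mpos by blast
  have a: "0 \<le> (\<Sum>X\<in>outcomes V E. outcome_prob V E (P 0) X)"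
    by (rule sum_nonneg, rule oprob_nonneg[OF P0])
  have b: "0 \<le> (\<Sum>Xs\<in>(PiE {..<\<mu>} (\<lambda>_. outcomes V E)). (\<Prod>i<\<mu>. outcome_prob V E (P i) (Xs i)))"
    by (rule sum_nonneg, rule prod_nonneg) (use Pr in \<open>auto intro!: oprob_nonneg\<close>)
  show ?thesis unfolding Zc_def using a b by simp
qed


lemma bc_cong:
  assumes "\<forall>i<\<mu>. S i = S2 i"
  shows "balanced_count \<mu> \<nu> V I S Xs = balanced_count \<mu> \<nu> V I S2 Xs"
proof -
  have "{i\<in>{..<\<mu>}. w \<in> reach (Xs i) (I i \<union> S i)} = {i\<in>{..<\<mu>}. w \<in> reach (Xs i) (I i \<union> S2 i)}" for w
    using assms by auto
  then show ?thesis unfolding balanced_count_def by simp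
qed

lemma Phi_cong:
  assumes "\<forall>i<\<mu>. S i = S2 i"
  shows "Phi corr \<mu> \<nu> V E P I S = Phi corr \<mu> \<nu> V E P I S2"
  unfolding Phi_def by (simp only: bc_cong[OF assms])

lemma eps_m:
  fixes \<epsilon> :: real and k \<nu> :: nat
  assumes eps: "\<epsilon> > 0" and kb: "real k \<ge> 2 * real \<nu> / \<epsilon>" and n2: "\<nu> \<ge> 2" and nk: "\<nu> \<le> k"
  shows "\<epsilon> * real (k div \<nu>) \<ge> 1"
proof -
  define m where "m = k div \<nu>"
  have m1: "m \<ge> 1" unfolding m_def using nk n2 using div_le_mono[of \<nu> k \<nu>] by simp
  have "k < (m + 1) * \<nu>" unfolding m_def using n2
    by (metis add.commute div_mult_mod_eq mod_less_divisor mult_Suc plus_1_eq_Suc le_zero_eq nat_add_left_cancel_less gr0I not_numeral_le_zero)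
  then have "real k < real ((m + 1) * \<nu>)" by (simp only: of_nat_less_iff)
  then have kr: "real k < (real m + 1) * real \<nu>" by (simp add: distrib_right)
  have "2 * real \<nu> \<le> \<epsilon> * real k" using kb eps by (simp add: pos_divide_le_eq mult.commute)
  also have "\<dots> < \<epsilon> * ((real m + 1) * real \<nu>)" using kr eps by simp
  finally have "2 * real \<nu> < (\<epsilon> * (real m + 1)) * real \<nu>" by (simp add: mult.assoc)
  then have "2 < \<epsilon> * (real m + 1)" using n2 by (simp add: mult_less_cancel_right)
  then have a: "\<epsilon> * real m > 2 - \<epsilon>" by (simp add: algebra_simps)
  have b: "\<epsilon> \<ge> 1 \<Longrightarrow> \<epsilon> * real m \<ge> 1"
  proof -
    assume e1: "\<epsilon> \<ge> 1"
    have "real m \<ge> 1" using m1 by simp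
    then have "1 * 1 \<le> \<epsilon> * real m" using e1 by (intro mult_mono) auto
    then show ?thesis by simp
  qed
  show ?thesis using a b unfolding m_def[symmetric] by linarith
qed

theorem mainTheorem14:
  fixes corr :: bool and \<mu> \<nu> k :: nat and V :: "'a set" and E :: "('a \<times> 'a) set"
    and P :: "nat \<Rightarrow> 'a \<times> 'a \<Rightarrow> real" and I :: "nat \<Rightarrow> 'a set"
    and v :: 'a and \<epsilon> \<alpha> :: real and S' S'opt Sopt :: "nat \<Rightarrow> 'a set"
  assumes inst: "BAL_instance corr \<mu> \<nu> V E P I k"
    and eps: "\<epsilon> > 0"
    and kbig: "real k \<ge> 2 * real \<nu> / \<epsilon>"
    and vnew: "v \<notin> V"
    and S'feas: "feasible \<mu> (insert v V) k S'"
    and S'opt: "optimal corr \<mu> \<nu> (insert v V) E P (\<lambda>i. if i < \<nu> then I i \<union> {v} else I i) k S'opt"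
    and approx: "Phi corr \<mu> \<nu> (insert v V) E P (\<lambda>i. if i < \<nu> then I i \<union> {v} else I i) S' \<ge> \<alpha> * Phi corr \<mu> \<nu> (insert v V) E P (\<lambda>i. if i < \<nu> then I i \<union> {v} else I i) S'opt"
    and Sopt: "optimal corr \<mu> \<nu> V E P I k Sopt"
  shows "Phi corr \<mu> \<nu> V E P I (\<lambda>i. S' i - {v}) \<ge> (\<alpha> - \<epsilon>) * Phi corr \<mu> \<nu> V E P I Sopt"
proof -
  let ?I' = "\<lambda>i. if i < \<nu> then I i \<union> {v} else I i"
  have n2: "2 \<le> \<nu>" and nm: "\<nu> \<le> \<mu>" and fin: "finite V" and EV: "E \<subseteq> V \<times> V"
    and Pr: "\<forall>i<\<mu>. \<forall>e\<in>E. 0 \<le> P i e \<and> P i e \<le> 1" and IV: "\<forall>i<\<mu>. I i \<subseteq> V"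
    and nk: "\<nu> \<le> k" and kV: "k \<le> \<nu> * card V"
    using inst unfolding BAL_instance_def by auto
  have mpos: "0 < \<mu>" using n2 nm by simp
  define Z where "Z = Zc corr \<mu> V E P"
  define A where "A = Phi corr \<mu> \<nu> V E P I (\<lambda>i. S' i - {v})"
  define B where "B = Phi corr \<mu> \<nu> V E P I Sopt"
  define C where "C = Phi corr \<mu> \<nu> V E P I (\<lambda>i. S'opt i - {v})"
  have Z0: "Z \<ge> 0" unfolding Z_def by (rule Zc_nonneg[OF Pr mpos])
  have A0: "A \<ge> 0" unfolding A_def using Phi_lower[OF Pr mpos, where m=0] by (simp add: balanced_count_def)
  have B0: "B \<ge> 0" unfolding B_def using Phi_lower[OF Pr mpos, where m=0] by (simp add: balanced_count_def)
  have sh: "Phi corr \<mu> \<nu> (insert v V) E P ?I' T = Phi corr \<mu> \<nu> V E P I (\<lambda>i. T i - {v}) + Z" for T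
    unfolding Z_def by (rule Phi_shift[OF fin EV vnew IV nm])
  have ap: "A + Z \<ge> \<alpha> * (C + Z)" using approx unfolding A_def C_def sh .
  have Soptf: "feasible \<mu> V k Sopt" using Sopt unfolding optimal_def by blast
  then have "feasible \<mu> (insert v V) k Sopt" unfolding feasible_def by blast
  then have "Phi corr \<mu> \<nu> (insert v V) E P ?I' Sopt \<le> Phi corr \<mu> \<nu> (insert v V) E P ?I' S'opt"
    using S'opt unfolding optimal_def by blast
  moreover have "Phi corr \<mu> \<nu> V E P I (\<lambda>i. Sopt i - {v}) = B"
    unfolding B_def using Soptf vnew unfolding feasible_def by (intro Phi_cong) blast
  ultimately have CB: "C \<ge> B" unfolding sh C_def by simp
  define m where "m = k div \<nu>"
  have "m \<le> card V" unfolding m_def using kV n2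
    using div_le_mono[of k "\<nu> * card V" \<nu>] by simp
  then obtain W where WV: "W \<subseteq> V" and cW: "card W = m" and fW: "finite W"
    by (rule obtain_subset_with_card_n)
  define T0 where "T0 = (\<lambda>i::nat. if i < \<nu> then W else {})"
  have "(\<Sum>i<\<mu>. card (T0 i)) = (\<Sum>i<\<nu>. m)"
  proof -
    have "(\<Sum>i<\<mu>. card (T0 i)) = (\<Sum>i<\<nu>. card (T0 i)) + (\<Sum>i=\<nu>..<\<mu>. card (T0 i))"
      using nm by (metis sum.atLeastLessThan_concat zero_le lessThan_atLeast0)
    also have "\<dots> = (\<Sum>i<\<nu>. m)" unfolding T0_def using cW by simp
    finally show ?thesis .
  qed
  also have "\<dots> \<le> k" unfolding m_def by (simp add: mult.commute div_times_less_eq_dividend)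
  finally have "feasible \<mu> V k T0" unfolding feasible_def T0_def using WV by auto
  then have BT: "B \<ge> Phi corr \<mu> \<nu> V E P I T0" unfolding B_def using Sopt unfolding optimal_def by blast
  have "balanced_count \<mu> \<nu> V I T0 Xs \<ge> real m" for Xs
  proof -
    have "W \<subseteq> {w\<in>V. let c = card {i\<in>{..<\<mu>}. w \<in> reach (Xs i) (I i \<union> T0 i)} in c = 0 \<or> \<nu> \<le> c}"
    proof
      fix w assume w: "w \<in> W"
      have "{..<\<nu>} \<subseteq> {i\<in>{..<\<mu>}. w \<in> reach (Xs i) (I i \<union> T0 i)}"
        using w nm unfolding T0_def reach_def by auto
      then have "\<nu> \<le> card {i\<in>{..<\<mu>}. w \<in> reach (Xs i) (I i \<union> T0 i)}"
        using card_mono[of "{i\<in>{..<\<mu>}. w \<in> reach (Xs i) (I i \<union> T0 i)}" "{..<\<nu>}"] by simp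
      then show "w \<in> {w\<in>V. let c = card {i\<in>{..<\<mu>}. w \<in> reach (Xs i) (I i \<union> T0 i)} in c = 0 \<or> \<nu> \<le> c}"
        using w WV by (auto simp: Let_def)
    qed
    then have "card W \<le> card {w\<in>V. let c = card {i\<in>{..<\<mu>}. w \<in> reach (Xs i) (I i \<union> T0 i)} in c = 0 \<or> \<nu> \<le> c}"
      using fin by (intro card_mono) auto
    then show ?thesis unfolding balanced_count_def cW by simp
  qed
  then have "Phi corr \<mu> \<nu> V E P I T0 \<ge> real m * Z" unfolding Z_def by (rule Phi_lower[OF Pr mpos])
  with BT have BmZ: "B \<ge> real m * Z" by simp
  have em: "\<epsilon> * real m \<ge> 1" unfolding m_def by (rule eps_m[OF eps kbig n2 nk])
  have f1: "\<epsilon> * B \<ge> \<epsilon> * (real m * Z)" using BmZ eps by simp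
  have f2: "(\<epsilon> * real m) * Z \<ge> 1 * Z" using em Z0 by (rule mult_right_mono)
  show ?thesis
  proof (cases "\<alpha> \<ge> 0")
    case False
    have "(\<alpha> - \<epsilon>) * B \<le> 0" using False eps B0 by (simp add: mult_nonpos_nonneg)
    then show ?thesis using A0 unfolding A_def B_def by linarith
  next
    case True
    have "\<alpha> * C \<ge> \<alpha> * B" using CB True by (rule mult_left_mono)
    then have a: "A \<ge> \<alpha> * B + (\<alpha> - 1) * Z" using ap by (simp add: algebra_simps)
    show ?thesis
    proof (cases "\<alpha> \<le> 1")
      case True
      have "(\<alpha> - 1) * Z \<ge> - Z" using True Z0 \<open>\<alpha> \<ge> 0\<close> by (simp add: algebra_simps mult_left_le_one_le)
      have e: "\<epsilon> * (real m * Z) = (\<epsilon> * real m) * Z" by (simp add: mult.assoc)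
      have g: "(\<alpha> - \<epsilon>) * B = \<alpha> * B - \<epsilon> * B" by (simp add: left_diff_distrib)
      show ?thesis using a f1 f2 e g \<open>(\<alpha> - 1) * Z \<ge> - Z\<close> unfolding A_def[symmetric] B_def[symmetric] by linarith
    next
      case False
      have "(\<alpha> - 1) * Z \<ge> 0" using False Z0 by simp
      moreover have "\<epsilon> * B \<ge> 0" using eps B0 by simp
      moreover have g: "(\<alpha> - \<epsilon>) * B = \<alpha> * B - \<epsilon> * B" by (simp add: left_diff_distrib)
      ultimately show ?thesis using a unfolding A_def[symmetric] B_def[symmetric] by linarith
    qed
  qed
qed

end
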